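(* Let $V$ be a vertex algebra of countable dimension over $\mathbb{C}$ and let $W$ be an irreducible $L_r(V)$-module. Then $W$ is isomorphic as an $L_r(V)$-module to $U_{\mathbf{a}}$ for some irreducible $V$-module $U$ and some $\mathbf{a}\in(\mathbb{C}^\times)^r$.
   Context: Let $L_r=\mathbb{C}[t_1^{\pm1},\dots,t_r^{\pm1}]$, with $\mathbf{t}^{\mathbf{m}}=t_1^{m_1}\cdots t_r^{m_r}$; as a commutative associative algebra with identity it is a vertex algebra with $Y(a,x)b=ab$ and vacuum $1$. For a vertex algebra $V$, $L_r(V)=V\otimes L_r$ denotes the tensor product vertex algebra. For a $V$-module $(U,Y_U)$ and $\mathbf{a}=(a_1,\dots,a_r)\in(\mathbb{C}^\times)^r$, $U_{\mathbf{a}}$ denotes the $L_r(V)$-module with underlying space $U$ and vertex operators $\widehat{Y}(v\otimes\mathbf{t}^{\mathbf{m}},x)=\mathbf{a}^{\mathbf{m}}Y_U(v,x)$ for $v\in V,\mathbf{m}\in\mathbb{Z}^r$, where $\mathbf{a}^{\mathbf{m}}=a_1^{m_1}\cdots a_r^{m_r}$. *)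

theory Defs
  imports Complex_Main "HOL-Library.Poly_Mapping" "HOL-Library.Countable_Set"
begin

text \<open>Finite sum of an eventually-zero family indexed by nat (the sums in the
Borcherds identity are finite thanks to the truncation axiom).\<close>
definition fsum :: "(nat \<Rightarrow> 'a::comm_monoid_add) \<Rightarrow> 'a" where
  "fsum f = sum f {i. f i \<noteq> 0}"

text \<open>The Jacobi identity is written
in its equivalent component form (Borcherds identity).\<close>
definition vertex_module ::
  "(complex \<Rightarrow> 'v::ab_group_add \<Rightarrow> 'v) \<Rightarrow> ('v \<Rightarrow> int \<Rightarrow> 'v \<Rightarrow> 'v) \<Rightarrow> 'v \<Rightarrow>
   (complex \<Rightarrow> 'm::ab_group_add \<Rightarrow> 'm) \<Rightarrow> ('v \<Rightarrow> int \<Rightarrow> 'm \<Rightarrow> 'm) \<Rightarrow> bool" where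
  "vertex_module sc Y vac scM YM \<longleftrightarrow>
     vector_space sc \<and> vector_space scM \<and>
     (\<forall>u n. Vector_Spaces.linear scM scM (YM u n)) \<and>
     (\<forall>n w. Vector_Spaces.linear sc scM (\<lambda>u. YM u n w)) \<and>
     (\<forall>u w. \<exists>N. \<forall>n\<ge>N. YM u n w = 0) \<and>
     (\<forall>n w. YM vac n w = (if n = -1 then w else 0)) \<and>
     (\<forall>u v w l m n.
        fsum (\<lambda>i. scM ((of_int m) gchoose i) (YM (Y u (l + int i) v) (m + n - int i) w)) =
        fsum (\<lambda>i. scM ((-1) ^ i * ((of_int l) gchoose i))
                   (YM u (m + l - int i) (YM v (n + int i) w)
                    - scM ((-1) powi l) (YM v (n + l - int i) (YM u (m + int i) w)))))"

definition vertex_algebra ::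
  "(complex \<Rightarrow> 'v::ab_group_add \<Rightarrow> 'v) \<Rightarrow> ('v \<Rightarrow> int \<Rightarrow> 'v \<Rightarrow> 'v) \<Rightarrow> 'v \<Rightarrow> bool" where
  "vertex_algebra sc Y vac \<longleftrightarrow>
     vertex_module sc Y vac sc Y \<and> (\<forall>u. Y u (-1) vac = u) \<and> (\<forall>u n. n \<ge> 0 \<longrightarrow> Y u n vac = 0)"

definition countable_dim :: "(complex \<Rightarrow> 'v::ab_group_add \<Rightarrow> 'v) \<Rightarrow> bool" where
  "countable_dim sc \<longleftrightarrow>
     (\<exists>B. countable B \<and> \<not> module.dependent sc B \<and> module.span sc B = UNIV)"

definition irreducible_module ::
  "(complex \<Rightarrow> 'v::ab_group_add \<Rightarrow> 'v) \<Rightarrow> ('v \<Rightarrow> int \<Rightarrow> 'v \<Rightarrow> 'v) \<Rightarrow> 'v \<Rightarrow>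
   (complex \<Rightarrow> 'm::ab_group_add \<Rightarrow> 'm) \<Rightarrow> ('v \<Rightarrow> int \<Rightarrow> 'm \<Rightarrow> 'm) \<Rightarrow> bool" where
  "irreducible_module sc Y vac scM YM \<longleftrightarrow>
     vertex_module sc Y vac scM YM \<and> (\<exists>w::'m. w \<noteq> 0) \<and>
     (\<forall>S. module.subspace scM S \<and> (\<forall>u n w. w \<in> S \<longrightarrow> YM u n w \<in> S)
          \<longrightarrow> S = {0} \<or> S = UNIV)"

definition module_iso ::
  "(complex \<Rightarrow> 'm1::ab_group_add \<Rightarrow> 'm1) \<Rightarrow> ('v \<Rightarrow> int \<Rightarrow> 'm1 \<Rightarrow> 'm1) \<Rightarrow>
   (complex \<Rightarrow> 'm2::ab_group_add \<Rightarrow> 'm2) \<Rightarrow> ('v \<Rightarrow> int \<Rightarrow> 'm2 \<Rightarrow> 'm2) \<Rightarrow> bool" where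
  "module_iso sc1 Y1 sc2 Y2 \<longleftrightarrow>
     (\<exists>f. bij f \<and> Vector_Spaces.linear sc1 sc2 f \<and> (\<forall>u n w. f (Y1 u n w) = Y2 u n (f w)))"

text \<open>L_r(V) = V \<otimes> C[t_1^{\<pm>1},...,t_r^{\<pm>1}], realised as finitely supported functions
Z^r \<rightarrow> V (the element F corresponds to \<Sum>_m F(m) \<otimes> t^m); r = CARD('i).\<close>
definition lr_scale ::
  "(complex \<Rightarrow> 'v::ab_group_add \<Rightarrow> 'v) \<Rightarrow> complex \<Rightarrow> (('i \<Rightarrow> int) \<Rightarrow>\<^sub>0 'v) \<Rightarrow> (('i \<Rightarrow> int) \<Rightarrow>\<^sub>0 'v)" where
  "lr_scale sc c F = (\<Sum>k\<in>Poly_Mapping.keys F. Poly_Mapping.single k (sc c (Poly_Mapping.lookup F k)))"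

definition lr_Y ::
  "('v::ab_group_add \<Rightarrow> int \<Rightarrow> 'v \<Rightarrow> 'v) \<Rightarrow> (('i \<Rightarrow> int) \<Rightarrow>\<^sub>0 'v) \<Rightarrow> int \<Rightarrow>
   (('i \<Rightarrow> int) \<Rightarrow>\<^sub>0 'v) \<Rightarrow> (('i \<Rightarrow> int) \<Rightarrow>\<^sub>0 'v)" where
  "lr_Y Y F n G = (\<Sum>k\<in>Poly_Mapping.keys F. \<Sum>k'\<in>Poly_Mapping.keys G.
                     Poly_Mapping.single (\<lambda>i. k i + k' i) (Y (Poly_Mapping.lookup F k) n (Poly_Mapping.lookup G k')))"

definition lr_vac :: "'v::zero \<Rightarrow> (('i \<Rightarrow> int) \<Rightarrow>\<^sub>0 'v)" where
  "lr_vac vac = Poly_Mapping.single (\<lambda>i. 0) vac"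

text \<open>The L_r(V)-module U_a: (v \<otimes> t^m)_n w = a^m v_n w, extended linearly.\<close>
definition twist_Y ::
  "(complex \<Rightarrow> 'm::ab_group_add \<Rightarrow> 'm) \<Rightarrow> ('v::zero \<Rightarrow> int \<Rightarrow> 'm \<Rightarrow> 'm) \<Rightarrow> ('i::finite \<Rightarrow> complex) \<Rightarrow>
   (('i \<Rightarrow> int) \<Rightarrow>\<^sub>0 'v) \<Rightarrow> int \<Rightarrow> 'm \<Rightarrow> 'm" where
  "twist_Y scU YU a F n w = (\<Sum>k\<in>Poly_Mapping.keys F. scU (\<Prod>i\<in>UNIV. a i powi k i) (YU (Poly_Mapping.lookup F k) n w))"

end

theory Submission
  imports Defs "HOL-Computational_Algebra.Fundamental_Theorem_Algebra" "HOL-Analysis.Continuum_Not_Denumerable"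
begin

primrec hor :: "(complex \<Rightarrow> 'w::ab_group_add \<Rightarrow> 'w) \<Rightarrow> ('w \<Rightarrow> 'w) \<Rightarrow> complex list \<Rightarrow> 'w \<Rightarrow> 'w" where
  "hor s T [] w = 0"
| "hor s T (a # as) w = s a w + T (hor s T as w)"

definition opeval :: "(complex \<Rightarrow> 'w::ab_group_add \<Rightarrow> 'w) \<Rightarrow> ('w \<Rightarrow> 'w) \<Rightarrow> complex poly \<Rightarrow> 'w \<Rightarrow> 'w" where
  "opeval s T p = hor s T (coeffs p)"

locale dixloc = vector_space s for s :: "complex \<Rightarrow> 'w::ab_group_add \<Rightarrow> 'w" +
  fixes T :: "'w \<Rightarrow> 'w"
  assumes Tadd: "T (x + y) = T x + T y" and Tsc: "T (s c x) = s c (T x)"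
begin

lemma T0[simp]: "T 0 = 0"
  using Tsc[of 0 0] by simp

lemma Tdiff: "T (x - y) = T x - T y"
  using Tadd[of "x - y" y] by (simp add: algebra_simps)

lemma opeval_0[simp]: "opeval s T 0 w = 0"
  by (simp add: opeval_def)

lemma opeval_pCons[simp]: "opeval s T (pCons a p) w = s a w + T (opeval s T p w)"
  by (simp add: opeval_def cCons_def)

lemma opeval_addw: "opeval s T p (x + y) = opeval s T p x + opeval s T p y"
  by (induct p) (simp_all add: Tadd scale_right_distrib algebra_simps)

lemma opeval_scw: "opeval s T p (s c x) = s c (opeval s T p x)"
  by (induct p) (simp_all add: Tadd Tsc scale_right_distrib mult.commute)

lemma opeval_zerow[simp]: "opeval s T p 0 = 0"
  using opeval_scw[of p 0 0] by simp

lemma opeval_sumw: "opeval s T p (sum f A) = (\<Sum>a\<in>A. opeval s T p (f a))"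
  by (induct A rule: infinite_finite_induct) (simp_all add: opeval_addw)

lemma opeval_add: "opeval s T (p + q) w = opeval s T p w + opeval s T q w"
  by (induct p q rule: poly_induct2) (simp_all add: Tadd scale_left_distrib algebra_simps)

lemma opeval_smult: "opeval s T (smult c p) w = s c (opeval s T p w)"
  by (induct p) (simp_all add: Tsc scale_right_distrib)

lemma opeval_sum: "opeval s T (sum f A) w = (\<Sum>a\<in>A. opeval s T (f a) w)"
  by (induct A rule: infinite_finite_induct) (simp_all add: opeval_add)

lemma opeval_mult: "opeval s T (p * q) w = opeval s T p (opeval s T q w)"
  by (induct p) (simp_all add: opeval_add opeval_smult)

lemma opeval_const: "opeval s T [:c:] w = s c w"
  by simp

lemma opeval_lin: "opeval s T [:-z, 1:] w = T w - s z w"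
  by simp

lemma opeval_inj:
  assumes inj: "\<And>z x. T x - s z x = 0 \<Longrightarrow> x = 0"
  shows "p \<noteq> 0 \<Longrightarrow> opeval s T p w = 0 \<Longrightarrow> w = 0"
proof (induct "degree p" arbitrary: p w rule: less_induct)
  case less
  show ?case
  proof (cases "degree p = 0")
    case True
    then obtain c where p: "p = [:c:]" by (metis degree_eq_zeroE)
    with less have "c \<noteq> 0" by auto
    with less p show ?thesis by simp
  next
    case False
    then have "\<not> constant (poly p)" by (simp add: constant_degree)
    then obtain z where z: "poly p z = 0" using fundamental_theorem_of_algebra by blast
    define q where "q = synthetic_div p z"
    have pq: "p = [:-z, 1:] * q" using synthetic_div_correct'[of z p] z by (simp add: q_def)
    have dq: "degree q < degree p" using False by (simp add: q_def degree_synthetic_div)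
    have q0: "q \<noteq> 0" using pq less(2) by auto
    have "opeval s T p w = T (opeval s T q w) - s z (opeval s T q w)"
      unfolding pq opeval_mult by (rule opeval_lin)
    with less(3) have "opeval s T q w = 0" using inj by metis
    then show ?thesis using less(1)[OF dq q0] by blast
  qed
qed

lemma resolv_indep:
  assumes inj: "\<And>z x. T x - s z x = 0 \<Longrightarrow> x = 0"
    and w0: "w0 \<noteq> 0" and v: "\<And>z. T (v z) - s z (v z) = w0"
    and fin: "finite L" and sm: "(\<Sum>z\<in>L. s (c z) (v z)) = 0" and mu: "\<mu> \<in> L"
  shows "c \<mu> = 0"
proof -
  define P where "P z = (\<Prod>\<nu>\<in>L - {z}. [:-\<nu>, 1:])" for z
  define PP where "PP = (\<Prod>\<nu>\<in>L. [:-\<nu>, 1:])"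
  have key: "opeval s T PP (v z) = opeval s T (P z) w0" if "z \<in> L" for z
  proof -
    have "PP = P z * [:-z, 1:]" unfolding PP_def P_def
      using prod.remove[OF fin that, of "\<lambda>\<nu>. [:-\<nu>, 1:]"] by (simp add: mult.commute)
    then show ?thesis by (simp only: opeval_mult opeval_lin v)
  qed
  have "0 = opeval s T PP (\<Sum>z\<in>L. s (c z) (v z))" using sm by simp
  also have "\<dots> = (\<Sum>z\<in>L. s (c z) (opeval s T PP (v z)))"
    by (simp only: opeval_sumw opeval_scw)
  also have "\<dots> = (\<Sum>z\<in>L. s (c z) (opeval s T (P z) w0))"
    by (rule sum.cong) (simp_all only: key)
  also have "\<dots> = opeval s T (\<Sum>z\<in>L. smult (c z) (P z)) w0"
    by (simp add: opeval_sum opeval_smult)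
  finally have "opeval s T (\<Sum>z\<in>L. smult (c z) (P z)) w0 = 0" by simp
  then have "(\<Sum>z\<in>L. smult (c z) (P z)) = 0"
  proof (rule contrapos_pp)
    assume "(\<Sum>z\<in>L. smult (c z) (P z)) \<noteq> 0"
    from opeval_inj[OF _ this] inj w0 show "opeval s T (\<Sum>z\<in>L. smult (c z) (P z)) w0 \<noteq> 0" by blast
  qed
  then have "poly (\<Sum>z\<in>L. smult (c z) (P z)) \<mu> = 0" by simp
  then have "(\<Sum>z\<in>L. c z * poly (P z) \<mu>) = 0" by (simp add: poly_sum)
  moreover have "(\<Sum>z\<in>L. c z * poly (P z) \<mu>) = c \<mu> * poly (P \<mu>) \<mu>"
  proof -
    have "(\<Sum>z\<in>L. c z * poly (P z) \<mu>) = c \<mu> * poly (P \<mu>) \<mu> + (\<Sum>z\<in>L - {\<mu>}. c z * poly (P z) \<mu>)"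
      by (rule sum.remove[OF fin mu])
    moreover have "poly (P z) \<mu> = 0" if "z \<in> L - {\<mu>}" for z
    proof -
      have "\<mu> \<in> L - {z}" using that mu by auto
      then show ?thesis unfolding P_def poly_prod using fin
        by (subst prod_zero_iff) auto
    qed
    ultimately show ?thesis by simp
  qed
  moreover have "poly (P \<mu>) \<mu> \<noteq> 0" unfolding P_def poly_prod using fin
    by (subst prod_zero_iff) auto
  ultimately show ?thesis by simp
qed

lemma dixmier:
  assumes w0: "(w0::'w) \<noteq> 0" and cG: "countable G" and spG: "span G = UNIV"
    and H: "\<And>z. (\<forall>w. T w = s z w) \<or> ((\<forall>x. T x - s z x = 0 \<longrightarrow> x = 0) \<and> (\<forall>y. \<exists>x. T x - s z x = y))"
  shows "\<exists>c. \<forall>w. T w = s c w"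
proof (rule ccontr)
  assume nc: "\<not> (\<exists>c. \<forall>w. T w = s c w)"
  then have inj: "\<And>z x. T x - s z x = 0 \<Longrightarrow> x = 0" and sur: "\<And>z y. \<exists>x. T x - s z x = y"
    using H by blast+
  define v where "v z = (SOME x. T x - s z x = w0)" for z
  have v: "\<And>z. T (v z) - s z (v z) = w0" unfolding v_def by (rule someI_ex) (rule sur)
  have vinj: "inj v"
  proof (rule injI)
    fix a b assume ab: "v a = v b"
    have "v a \<noteq> 0" using v[of a] w0 by auto
    moreover have "s (b - a) (v a) = 0" using v[of a] v[of b] ab by (simp add: scale_left_diff_distrib algebra_simps) blast
    ultimately show "a = b" by simp
  qed
  have "G \<noteq> {}" using spG w0 by auto
  define g where "g = from_nat_into G"
  have rg: "range g = G" using \<open>G \<noteq> {}\<close> cG by (simp add: g_def)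
  have ex: "\<exists>N. x \<in> span (g ` {..<N})" for x
  proof -
    have "x \<in> span (range g)" using rg spG by simp
    then show ?thesis
    proof (induct rule: span_induct_alt)
      case base
      show ?case using span_zero by blast
    next
      case (step c x y)
      then obtain n where n: "x = g n" by blast
      from step obtain M where M: "y \<in> span (g ` {..<M})" by blast
      let ?N = "max (Suc n) M"
      have "g ` {..<M} \<subseteq> g ` {..<?N}" by auto
      then have "y \<in> span (g ` {..<?N})" using M span_mono by blast
      moreover have "x \<in> span (g ` {..<?N})" using n by (intro span_base) auto
      ultimately have "s c x + y \<in> span (g ` {..<?N})" by (intro span_add span_scale)
      then show ?case by blast
    qed
  qed
  define Lam where "Lam N = {z. v z \<in> span (g ` {..<N})}" for N
  have "UNIV = (\<Union>N. Lam N)" using ex unfolding Lam_def by blast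
  moreover have "countable (\<Union>N. Lam N)" if "\<forall>N. countable (Lam N)"
    using that by (intro countable_UN) auto
  ultimately obtain N where "uncountable (Lam N)"
    using uncountable_UNIV_complex by auto
  then have "infinite (Lam N)" using countable_finite by blast
  then obtain F where F: "F \<subseteq> Lam N" "finite F" "card F = Suc N"
    using infinite_arbitrarily_large by blast
  have indep: "independent (v ` F)"
  proof
    assume "dependent (v ` F)"
    then obtain t u where t: "finite t" "t \<subseteq> v ` F" "(\<Sum>x\<in>t. s (u x) x) = 0" "\<exists>x\<in>t. u x \<noteq> 0"
      unfolding dependent_explicit by blast
    define L where "L = {z\<in>F. v z \<in> t}"
    have tL: "t = v ` L" using t(2) unfolding L_def by auto
    have finL: "finite L" using F(2) unfolding L_def by simp
    have "(\<Sum>z\<in>L. s (u (v z)) (v z)) = 0"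
      using t(3) unfolding tL by (subst (asm) sum.reindex) (auto intro: inj_on_subset[OF vinj])
    then have "\<And>z. z \<in> L \<Longrightarrow> u (v z) = 0"
      using resolv_indep[OF _ w0 v finL, of "\<lambda>z. u (v z)"] inj by blast
    then show False using t(4) unfolding tL by blast
  qed
  have "v ` F \<subseteq> span (g ` {..<N})" using F(1) unfolding Lam_def by auto
  then have "card (v ` F) \<le> card (g ` {..<N})"
    using independent_span_bound[OF _ indep] by blast
  also have "\<dots> \<le> N" using card_image_le[of "{..<N}" g] by simp
  finally show False using F(3) card_image[OF inj_on_subset[OF vinj]] by simp
qed

end


lemma linD:
  assumes "Vector_Spaces.linear s1 s2 f"
  shows "module_hom s1 s2 f"
  using assms by (simp add: module_hom_iff_linear)

lemma lin_zero: "Vector_Spaces.linear s1 s2 f \<Longrightarrow> f 0 = 0"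
  by (drule linD) (rule module_hom.zero)

lemma lin_add: "Vector_Spaces.linear s1 s2 f \<Longrightarrow> f (x + y) = f x + f y"
  by (drule linD) (rule module_hom.add)

lemma lin_diff: "Vector_Spaces.linear s1 s2 f \<Longrightarrow> f (x - y) = f x - f y"
  by (drule linD) (rule module_hom.diff)

lemma lin_scale: "Vector_Spaces.linear s1 s2 f \<Longrightarrow> f (s1 c x) = s2 c (f x)"
  by (drule linD) (rule module_hom.scale)

lemma lin_sum: "Vector_Spaces.linear s1 s2 f \<Longrightarrow> f (sum g A) = (\<Sum>a\<in>A. f (g a))"
  by (drule linD) (rule module_hom.sum)

lemma fsum_single: "(\<And>i. i \<noteq> a \<Longrightarrow> f i = 0) \<Longrightarrow> fsum f = f a"
proof -
  assume h: "\<And>i. i \<noteq> a \<Longrightarrow> f i = 0"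
  show ?thesis
  proof (cases "f a = 0")
    case True
    have "f i = 0" for i using h True by (cases "i = a") auto
    then have "{i. f i \<noteq> 0} = {}" by auto
    then show ?thesis using True by (simp add: fsum_def)
  next
    case False
    then have "{i. f i \<noteq> 0} = {a}" using h by auto
    then show ?thesis by (simp add: fsum_def)
  qed
qed

lemma fsum_zero: "(\<And>i. f i = 0) \<Longrightarrow> fsum f = 0"
  by (simp add: fsum_def)

lemma pm_decomp: "F = (\<Sum>k\<in>Poly_Mapping.keys F. Poly_Mapping.single k (Poly_Mapping.lookup F k))"
  by (rule poly_mapping_eqI)
     (auto simp: lookup_sum lookup_single when_def in_keys_iff sum.delta)

lemma character:
  fixes c :: "('r::finite \<Rightarrow> int) \<Rightarrow> complex"
  assumes mult: "\<And>k k'. c (\<lambda>i. k i + k' i) = c k * c k'" and one: "c (\<lambda>i. 0) = 1"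
  defines "a \<equiv> (\<lambda>i. c (\<lambda>j. if j = i then 1 else 0))"
  shows "(\<forall>i. a i \<noteq> 0) \<and> (\<forall>k. c k = (\<Prod>i\<in>UNIV. a i powi k i))"
proof -
  define d where "d i m = (\<lambda>j::'r. if j = i then m else (0::int))" for i m
  have dadd: "(\<lambda>j. d i m j + d i m' j) = d i (m + m')" for i m m'
    by (auto simp: d_def)
  have d0: "d i 0 = (\<lambda>j. 0)" for i by (auto simp: d_def)
  have ad: "a i = c (d i 1)" for i by (simp add: a_def d_def)
  have anz: "a i \<noteq> 0" for i
  proof
    assume "a i = 0"
    have "c (d i 0) = c (d i 1) * c (d i (-1))"
      using mult[of "d i 1" "d i (-1)"] dadd[of i 1 "-1"] by simp
    then show False using \<open>a i = 0\<close> ad one d0 by simp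
  qed
  have cd: "c (d i m) = a i powi m" for i m
  proof (induct m rule: int_induct[where k=0])
    case base
    then show ?case using one d0 by simp
  next
    case (step1 m)
    have "c (d i (m + 1)) = c (d i m) * c (d i 1)" using mult[of "d i m" "d i 1"] dadd[of i m 1] by simp
    then show ?case using step1 ad anz by (simp add: power_int_add_1)
  next
    case (step2 m)
    have "c (d i m) = c (d i (m - 1)) * c (d i 1)" using mult[of "d i (m - 1)" "d i 1"] dadd[of i "m - 1" 1] by simp
    moreover have "a i powi m = a i powi (m - 1) * a i" using power_int_add_1[of "a i" "m - 1"] anz by simp
    ultimately show ?case using step2 ad anz by simp
  qed
  have csum: "c (\<lambda>j. \<Sum>i\<in>A. d i (k i) j) = (\<Prod>i\<in>A. c (d i (k i)))" if "finite A" for A k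
    using that
  proof (induct A rule: finite_induct)
    case empty
    then show ?case using one by simp
  next
    case (insert x A)
    have "c (\<lambda>j. \<Sum>i\<in>insert x A. d i (k i) j) = c (\<lambda>j. d x (k x) j + (\<lambda>j. \<Sum>i\<in>A. d i (k i) j) j)"
      using insert by simp
    also have "\<dots> = c (d x (k x)) * c (\<lambda>j. \<Sum>i\<in>A. d i (k i) j)" by (rule mult)
    finally show ?case using insert by simp
  qed
  have "c k = (\<Prod>i\<in>UNIV. a i powi k i)" for k
  proof -
    have "k = (\<lambda>j. \<Sum>i\<in>UNIV. d i (k i) j)" by (auto simp: d_def)
    then have "c k = (\<Prod>i\<in>UNIV. c (d i (k i)))" using csum[of UNIV k] by simp
    then show ?thesis by (simp add: cd)
  qed
  then show ?thesis using anz by blast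
qed

locale Wmod =
  fixes sc :: "complex \<Rightarrow> 'v::ab_group_add \<Rightarrow> 'v"
    and Y :: "'v \<Rightarrow> int \<Rightarrow> 'v \<Rightarrow> 'v"
    and vac :: 'v
    and scW :: "complex \<Rightarrow> 'w::ab_group_add \<Rightarrow> 'w"
    and YW :: "(('r::finite \<Rightarrow> int) \<Rightarrow>\<^sub>0 'v) \<Rightarrow> int \<Rightarrow> 'w \<Rightarrow> 'w"
  assumes VA: "vertex_algebra sc Y vac"
    and WM: "vertex_module (lr_scale sc) (lr_Y Y) (lr_vac vac) scW YW"
begin

lemma VM: "vertex_module sc Y vac sc Y" using VA by (simp add: vertex_algebra_def)

lemma Yvac: "Y vac n x = (if n = -1 then x else 0)" using VM by (simp add: vertex_module_def)
lemma Y0l: "Y 0 n x = 0" using VM lin_zero[of sc sc "\<lambda>u. Y u n x"] by (simp add: vertex_module_def)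
lemma Y0r: "Y u n 0 = 0" using VM lin_zero[of sc sc "Y u n"] by (simp add: vertex_module_def)

lemma vsW: "vector_space scW" using WM by (simp add: vertex_module_def)
lemma linW: "Vector_Spaces.linear scW scW (YW u n)" using WM by (simp add: vertex_module_def)
lemma linWl: "Vector_Spaces.linear (lr_scale sc) scW (\<lambda>u. YW u n w)" using WM by (simp add: vertex_module_def)
lemma YWvac: "YW (lr_vac vac) n w = (if n = -1 then w else 0)" using WM by (simp add: vertex_module_def)
sublocale W: vector_space scW by (rule vsW)

lemma YW0r[simp]: "YW u n 0 = 0" using lin_zero[OF linW] .
lemma YW0l[simp]: "YW 0 n w = 0" using lin_zero[OF linWl, of n w] by simp

lemma BI: "fsum (\<lambda>i. scW ((of_int m) gchoose i) (YW (lr_Y Y u (l + int i) v) (m + n - int i) w)) =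
        fsum (\<lambda>i. scW ((-1) ^ i * ((of_int l) gchoose i))
                   (YW u (m + l - int i) (YW v (n + int i) w)
                    - scW ((-1) powi l) (YW v (n + l - int i) (YW u (m + int i) w))))"
  using WM unfolding vertex_module_def by blast

lemma lrY_single: "lr_Y Y (Poly_Mapping.single k u) j (Poly_Mapping.single k' v) =
   Poly_Mapping.single (\<lambda>i. k i + k' i) (Y u j v)"
  by (cases "u = 0"; cases "v = 0") (simp_all add: lr_Y_def Y0l Y0r)

lemma lrY_vac: "j \<noteq> -1 \<Longrightarrow> lr_Y Y (Poly_Mapping.single k vac) j G = 0"
  by (cases "vac = 0") (simp_all add: lr_Y_def Y0l Yvac)

definition e where "e k = Poly_Mapping.single k vac"
definition E where "E k = YW (e k) (-1)"

lemma E_modes: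
  assumes j: "j \<noteq> -1"
  shows "YW (e k) j w = 0"
proof -
  have B: "fsum (\<lambda>i. scW ((of_int (j+1)) gchoose i) (YW (lr_Y Y (e k) (-2 + int i) (lr_vac vac)) (j+1 + 0 - int i) w)) =
        fsum (\<lambda>i. scW ((-1) ^ i * ((of_int (-2)) gchoose i))
                   (YW (e k) (j+1 + -2 - int i) (YW (lr_vac vac) (0 + int i) w)
                    - scW ((-1) powi (-2)) (YW (lr_vac vac) (0 + -2 - int i) (YW (e k) (j+1 + int i) w))))"
    by (rule BI)
  have L: "fsum (\<lambda>i. scW ((of_int (j+1)) gchoose i) (YW (lr_Y Y (e k) (-2 + int i) (lr_vac vac)) (j+1 + 0 - int i) w))
     = scW (of_int (j+1)) (YW (e k) j w)"
  proof -
    have "fsum (\<lambda>i. scW ((of_int (j+1)) gchoose i) (YW (lr_Y Y (e k) (-2 + int i) (lr_vac vac)) (j+1 + 0 - int i) w))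
       = (\<lambda>i. scW ((of_int (j+1)) gchoose i) (YW (lr_Y Y (e k) (-2 + int i) (lr_vac vac)) (j+1 + 0 - int i) w)) 1"
      by (rule fsum_single) (simp add: e_def lr_vac_def lrY_single Yvac)
    then show ?thesis by (simp add: e_def lr_vac_def lrY_single Yvac)
  qed
  have R: "fsum (\<lambda>i. scW ((-1) ^ i * ((of_int (-2)) gchoose i))
                   (YW (e k) (j+1 + -2 - int i) (YW (lr_vac vac) (0 + int i) w)
                    - scW ((-1) powi (-2)) (YW (lr_vac vac) (0 + -2 - int i) (YW (e k) (j+1 + int i) w)))) = 0"
    by (rule fsum_zero) (simp add: YWvac)
  from B L R have "scW (of_int (j+1)) (YW (e k) j w) = 0" by simp
  moreover have "(of_int (j+1) :: complex) \<noteq> 0" using j by (simp only: of_int_eq_0_iff)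
  ultimately show ?thesis by simp
qed

lemma E_comm: "E k (YW G n w) = YW G n (E k w)"
proof -
  have B: "fsum (\<lambda>i. scW ((of_int (-1)) gchoose i) (YW (lr_Y Y (e k) (0 + int i) G) (-1 + n - int i) w)) =
        fsum (\<lambda>i. scW ((-1) ^ i * ((of_int 0) gchoose i))
                   (YW (e k) (-1 + 0 - int i) (YW G (n + int i) w)
                    - scW ((-1) powi 0) (YW G (n + 0 - int i) (YW (e k) (-1 + int i) w))))"
    by (rule BI)
  have L: "fsum (\<lambda>i. scW ((of_int (-1)) gchoose i) (YW (lr_Y Y (e k) (0 + int i) G) (-1 + n - int i) w)) = 0"
    by (rule fsum_zero) (simp add: e_def lrY_vac)
  have R: "fsum (\<lambda>i. scW ((-1) ^ i * ((of_int 0) gchoose i))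
                   (YW (e k) (-1 + 0 - int i) (YW G (n + int i) w)
                    - scW ((-1) powi 0) (YW G (n + 0 - int i) (YW (e k) (-1 + int i) w))))
     = E k (YW G n w) - YW G n (E k w)"
  proof -
    have "fsum (\<lambda>i. scW ((-1) ^ i * ((of_int 0) gchoose i))
                   (YW (e k) (-1 + 0 - int i) (YW G (n + int i) w)
                    - scW ((-1) powi 0) (YW G (n + 0 - int i) (YW (e k) (-1 + int i) w))))
      = (\<lambda>i. scW ((-1) ^ i * ((of_int 0) gchoose i))
                   (YW (e k) (-1 + 0 - int i) (YW G (n + int i) w)
                    - scW ((-1) powi 0) (YW G (n + 0 - int i) (YW (e k) (-1 + int i) w)))) 0"
      by (rule fsum_single) (simp add: gbinomial_0_left)
    then show ?thesis by (simp add: E_def)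
  qed
  from B L R show ?thesis by simp
qed

lemma E_mult: "E k (E k' w) = E (\<lambda>i. k i + k' i) w"
proof -
  have B: "fsum (\<lambda>i. scW ((of_int 0) gchoose i) (YW (lr_Y Y (e k) (-1 + int i) (e k')) (0 + -1 - int i) w)) =
        fsum (\<lambda>i. scW ((-1) ^ i * ((of_int (-1)) gchoose i))
                   (YW (e k) (0 + -1 - int i) (YW (e k') (-1 + int i) w)
                    - scW ((-1) powi (-1)) (YW (e k') (-1 + -1 - int i) (YW (e k) (0 + int i) w))))"
    by (rule BI)
  have L: "fsum (\<lambda>i. scW ((of_int 0) gchoose i) (YW (lr_Y Y (e k) (-1 + int i) (e k')) (0 + -1 - int i) w))
     = E (\<lambda>i. k i + k' i) w"
  proof -
    have "fsum (\<lambda>i. scW ((of_int 0) gchoose i) (YW (lr_Y Y (e k) (-1 + int i) (e k')) (0 + -1 - int i) w))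
      = (\<lambda>i. scW ((of_int 0) gchoose i) (YW (lr_Y Y (e k) (-1 + int i) (e k')) (0 + -1 - int i) w)) 0"
      by (rule fsum_single) (simp add: gbinomial_0_left)
    then show ?thesis by (simp add: E_def e_def lrY_single Yvac)
  qed
  have R: "fsum (\<lambda>i. scW ((-1) ^ i * ((of_int (-1)) gchoose i))
                   (YW (e k) (0 + -1 - int i) (YW (e k') (-1 + int i) w)
                    - scW ((-1) powi (-1)) (YW (e k') (-1 + -1 - int i) (YW (e k) (0 + int i) w))))
     = E k (E k' w)"
  proof -
    have "fsum (\<lambda>i. scW ((-1) ^ i * ((of_int (-1)) gchoose i))
                   (YW (e k) (0 + -1 - int i) (YW (e k') (-1 + int i) w)
                    - scW ((-1) powi (-1)) (YW (e k') (-1 + -1 - int i) (YW (e k) (0 + int i) w))))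
      = (\<lambda>i. scW ((-1) ^ i * ((of_int (-1)) gchoose i))
                   (YW (e k) (0 + -1 - int i) (YW (e k') (-1 + int i) w)
                    - scW ((-1) powi (-1)) (YW (e k') (-1 + -1 - int i) (YW (e k) (0 + int i) w)))) 0"
      by (rule fsum_single) (simp add: E_modes)
    then show ?thesis by (simp add: E_def E_modes)
  qed
  from B L R show ?thesis by simp
qed

lemma E_single: "YW (Poly_Mapping.single k x) n w = E k (YW (Poly_Mapping.single (\<lambda>i. 0) x) n w)"
proof -
  have B: "fsum (\<lambda>i. scW ((of_int 0) gchoose i) (YW (lr_Y Y (e k) (-1 + int i) (Poly_Mapping.single (\<lambda>i. 0) x)) (0 + n - int i) w)) =
        fsum (\<lambda>i. scW ((-1) ^ i * ((of_int (-1)) gchoose i))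
                   (YW (e k) (0 + -1 - int i) (YW (Poly_Mapping.single (\<lambda>i. 0) x) (n + int i) w)
                    - scW ((-1) powi (-1)) (YW (Poly_Mapping.single (\<lambda>i. 0) x) (n + -1 - int i) (YW (e k) (0 + int i) w))))"
    by (rule BI)
  have L: "fsum (\<lambda>i. scW ((of_int 0) gchoose i) (YW (lr_Y Y (e k) (-1 + int i) (Poly_Mapping.single (\<lambda>i. 0) x)) (0 + n - int i) w))
     = YW (Poly_Mapping.single k x) n w"
  proof -
    have "fsum (\<lambda>i. scW ((of_int 0) gchoose i) (YW (lr_Y Y (e k) (-1 + int i) (Poly_Mapping.single (\<lambda>i. 0) x)) (0 + n - int i) w))
      = (\<lambda>i. scW ((of_int 0) gchoose i) (YW (lr_Y Y (e k) (-1 + int i) (Poly_Mapping.single (\<lambda>i. 0) x)) (0 + n - int i) w)) 0"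
      by (rule fsum_single) (simp add: gbinomial_0_left)
    then show ?thesis by (simp add: e_def lrY_single Yvac)
  qed
  have R: "fsum (\<lambda>i. scW ((-1) ^ i * ((of_int (-1)) gchoose i))
                   (YW (e k) (0 + -1 - int i) (YW (Poly_Mapping.single (\<lambda>i. 0) x) (n + int i) w)
                    - scW ((-1) powi (-1)) (YW (Poly_Mapping.single (\<lambda>i. 0) x) (n + -1 - int i) (YW (e k) (0 + int i) w))))
     = E k (YW (Poly_Mapping.single (\<lambda>i. 0) x) n w)"
  proof -
    have "fsum (\<lambda>i. scW ((-1) ^ i * ((of_int (-1)) gchoose i))
                   (YW (e k) (0 + -1 - int i) (YW (Poly_Mapping.single (\<lambda>i. 0) x) (n + int i) w)
                    - scW ((-1) powi (-1)) (YW (Poly_Mapping.single (\<lambda>i. 0) x) (n + -1 - int i) (YW (e k) (0 + int i) w))))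
      = (\<lambda>i. scW ((-1) ^ i * ((of_int (-1)) gchoose i))
                   (YW (e k) (0 + -1 - int i) (YW (Poly_Mapping.single (\<lambda>i. 0) x) (n + int i) w)
                    - scW ((-1) powi (-1)) (YW (Poly_Mapping.single (\<lambda>i. 0) x) (n + -1 - int i) (YW (e k) (0 + int i) w)))) 0"
      by (rule fsum_single) (simp add: E_modes)
    then show ?thesis by (simp add: E_def E_modes)
  qed
  from B L R show ?thesis by simp
qed

lemma E0: "E (\<lambda>i. 0) w = w"
  using YWvac[of "-1" w] by (simp add: E_def e_def lr_vac_def)

sublocale V: vector_space sc using VM by (simp add: vertex_module_def)

lemma lr_scale_single: "lr_scale sc c (Poly_Mapping.single k v) = Poly_Mapping.single k (sc c v)"
  by (cases "v = 0") (simp_all add: lr_scale_def)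

lemma linS: "Vector_Spaces.linear sc scW (\<lambda>v. YW (Poly_Mapping.single k v) n x)"
proof -
  have "module_hom sc scW (\<lambda>v. YW (Poly_Mapping.single k v) n x)"
  proof (rule module_hom.intro)
    show "module sc" using V.vector_space_axioms by (simp add: module_iff_vector_space)
    show "module scW" using W.vector_space_axioms by (simp add: module_iff_vector_space)
    show "module_hom_axioms sc scW (\<lambda>v. YW (Poly_Mapping.single k v) n x)"
    proof
      fix b1 b2
      show "YW (Poly_Mapping.single k (b1 + b2)) n x = YW (Poly_Mapping.single k b1) n x + YW (Poly_Mapping.single k b2) n x"
        using lin_add[OF linWl] by (simp add: single_add)
    next
      fix r b
      show "YW (Poly_Mapping.single k (sc r b)) n x = scW r (YW (Poly_Mapping.single k b) n x)"
        using lin_scale[OF linWl, of r "Poly_Mapping.single k b" n x] by (simp add: lr_scale_single)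
    qed
  qed
  then show ?thesis by (simp add: module_hom_iff_linear)
qed

lemma YW_decomp: "YW F n w = (\<Sum>k\<in>Poly_Mapping.keys F. E k (YW (Poly_Mapping.single (\<lambda>i. 0) (Poly_Mapping.lookup F k)) n w))"
proof -
  have "YW F n w = YW (\<Sum>k\<in>Poly_Mapping.keys F. Poly_Mapping.single k (Poly_Mapping.lookup F k)) n w"
    using pm_decomp[of F] by simp
  also have "\<dots> = (\<Sum>k\<in>Poly_Mapping.keys F. YW (Poly_Mapping.single k (Poly_Mapping.lookup F k)) n w)"
    using lin_sum[OF linWl] by blast
  also have "\<dots> = (\<Sum>k\<in>Poly_Mapping.keys F. E k (YW (Poly_Mapping.single (\<lambda>i. 0) (Poly_Mapping.lookup F k)) n w))"
    by (rule sum.cong[OF refl E_single])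
  finally show ?thesis .
qed

lemma YW_sum_single: "YW F n w = (\<Sum>k\<in>Poly_Mapping.keys F. YW (Poly_Mapping.single k (Poly_Mapping.lookup F k)) n w)"
proof -
  have "YW F n w = YW (\<Sum>k\<in>Poly_Mapping.keys F. Poly_Mapping.single k (Poly_Mapping.lookup F k)) n w"
    using pm_decomp[of F] by simp
  also have "\<dots> = (\<Sum>k\<in>Poly_Mapping.keys F. YW (Poly_Mapping.single k (Poly_Mapping.lookup F k)) n w)"
    using lin_sum[OF linWl] by blast
  finally show ?thesis .
qed

lemma W_span:
  assumes w0: "(w0::'w) \<noteq> 0" and cd: "countable_dim sc"
    and irr: "\<forall>S. W.subspace S \<and> (\<forall>u n w. w \<in> S \<longrightarrow> YW u n w \<in> S) \<longrightarrow> S = {0} \<or> S = UNIV"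
  shows "\<exists>G. countable G \<and> W.span G = UNIV"
proof -
  obtain B where cB: "countable B" and spB: "V.span B = UNIV"
    using cd unfolding countable_dim_def by blast
  define step where "step S = S \<union> (\<lambda>(k,b,n,x). YW (Poly_Mapping.single k b) n x) ` (UNIV \<times> B \<times> UNIV \<times> S)" for S
  define GN where "GN N = (step ^^ N) {w0}" for N
  define G where "G = (\<Union>N. GN N)"
  have cGN: "countable (GN N)" for N
  proof (induct N)
    case 0 then show ?case by (simp add: GN_def)
  next
    case (Suc N)
    have "GN (Suc N) = step (GN N)" by (simp add: GN_def)
    then show ?case using Suc cB by (simp add: step_def)
  qed
  have cG: "countable G" unfolding G_def using cGN by blast
  have inv1: "YW (Poly_Mapping.single k b) n x \<in> G" if xG: "x \<in> G" and bB: "b \<in> B" for x b k n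
  proof -
    obtain N where "x \<in> GN N" using xG unfolding G_def by blast
    then have "YW (Poly_Mapping.single k b) n x \<in> step (GN N)" unfolding step_def using bB by force
    then have "YW (Poly_Mapping.single k b) n x \<in> GN (Suc N)" by (simp add: GN_def)
    then show ?thesis unfolding G_def by blast
  qed
  have inv2: "YW (Poly_Mapping.single k v) n x \<in> W.span G" if xG: "x \<in> G" for x v k n
  proof -
    have "v \<in> V.span B" using spB by simp
    then show ?thesis
    proof (induct rule: V.span_induct_alt)
      case base
      then show ?case by (simp add: W.span_zero)
    next
      case (step c b y)
      have "YW (Poly_Mapping.single k (sc c b + y)) n x = scW c (YW (Poly_Mapping.single k b) n x) + YW (Poly_Mapping.single k y) n x"
        using lin_add[OF linS] lin_scale[OF linS] by simp
      then show ?case using step inv1[OF xG] by (simp add: W.span_add W.span_scale W.span_base)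
    qed
  qed
  have inv3: "YW F n x \<in> W.span G" if "x \<in> W.span G" for x F n
    using that
  proof (induct rule: W.span_induct_alt)
    case base
    then show ?case by (simp add: W.span_zero)
  next
    case (step c g y)
    have "YW F n (scW c g + y) = scW c (YW F n g) + YW F n y"
      using lin_add[OF linW] lin_scale[OF linW] by simp
    moreover have "YW F n g \<in> W.span G"
      by (subst YW_sum_single) (rule W.subspace_sum[OF W.subspace_span], rule inv2, rule step(1))
    ultimately show ?case using step by (simp add: W.span_add W.span_scale)
  qed
  have "W.span G = {0} \<or> W.span G = UNIV" using irr inv3 W.subspace_span by blast
  moreover have "w0 \<in> W.span G" by (rule W.span_base) (simp add: G_def GN_def, rule exI[of _ 0], simp)
  ultimately show ?thesis using w0 cG by auto
qed

lemma E_scalar: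
  assumes w0: "(w0::'w) \<noteq> 0" and cd: "countable_dim sc"
    and irr: "\<forall>S. W.subspace S \<and> (\<forall>u n w. w \<in> S \<longrightarrow> YW u n w \<in> S) \<longrightarrow> S = {0} \<or> S = UNIV"
  shows "\<exists>c. \<forall>w. E k w = scW c w"
proof -
  obtain G where cG: "countable G" and spG: "W.span G = UNIV" using W_span[OF w0 cd irr] by blast
  interpret D: dixloc scW "E k"
    by (intro dixloc.intro vsW dixloc_axioms.intro) (simp_all add: E_def lin_add[OF linW] lin_scale[OF linW])
  show ?thesis
  proof (rule D.dixmier[OF w0 cG spG])
    fix z
    define f where "f x = E k x - scW z x" for x
    have fadd: "f (x + y) = f x + f y" for x y
      by (simp add: f_def lin_add[OF linW] E_def W.scale_right_distrib algebra_simps)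
    have fsc: "f (scW c x) = scW c (f x)" for c x
      by (simp add: f_def lin_scale[OF linW] E_def W.scale_right_diff_distrib mult.commute)
    have f0: "f 0 = 0" using fsc[of 0 0] by simp
    have fY: "f (YW u n x) = YW u n (f x)" for u n x
      by (simp add: f_def E_comm lin_diff[OF linW] lin_scale[OF linW])
    define K where "K = {x. f x = 0}"
    have K: "K = {0} \<or> K = UNIV"
    proof -
      have "W.subspace K" unfolding K_def
        by (rule W.subspaceI) (simp_all add: f0 fadd fsc)
      moreover have "\<forall>u n w. w \<in> K \<longrightarrow> YW u n w \<in> K" unfolding K_def by (simp add: fY)
      ultimately show ?thesis using irr by blast
    qed
    have I: "range f = {0} \<or> range f = UNIV"
    proof -
      have "W.subspace (range f)"
      proof (rule W.subspaceI)
        show "0 \<in> range f" using f0[symmetric] by (rule range_eqI)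
        show "x + y \<in> range f" if "x \<in> range f" "y \<in> range f" for x y
        proof -
          from that obtain a b where "x = f a" "y = f b" by auto
          then have "x + y = f (a + b)" by (simp add: fadd)
          then show ?thesis by (rule range_eqI)
        qed
        show "scW c x \<in> range f" if "x \<in> range f" for c x
        proof -
          from that obtain a where "x = f a" by auto
          then have "scW c x = f (scW c a)" by (simp add: fsc)
          then show ?thesis by (rule range_eqI)
        qed
      qed
      moreover have "\<forall>u n w. w \<in> range f \<longrightarrow> YW u n w \<in> range f"
      proof (intro allI impI)
        fix u n w assume "w \<in> range f"
        then obtain a where "w = f a" by auto
        then have "YW u n w = f (YW u n a)" by (simp add: fY)
        then show "YW u n w \<in> range f" by (rule range_eqI)
      qed
      ultimately show ?thesis using irr by blast
    qed
    show "(\<forall>w. E k w = scW z w) \<or> ((\<forall>x. E k x - scW z x = 0 \<longrightarrow> x = 0) \<and> (\<forall>y. \<exists>x. E k x - scW z x = y))"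
    proof (cases "K = UNIV")
      case True
      then show ?thesis unfolding K_def f_def by auto
    next
      case False
      with K have K0: "K = {0}" by blast
      have "range f \<noteq> {0}"
      proof
        assume "range f = {0}"
        then have "f w0 = 0" by auto
        then show False using K0 w0 unfolding K_def by auto
      qed
      with I have "range f = UNIV" by blast
      then have "\<forall>y. \<exists>x. f x = y" by (metis UNIV_I imageE)
      moreover have "\<forall>x. f x = 0 \<longrightarrow> x = 0" using K0 unfolding K_def by auto
      ultimately show ?thesis unfolding f_def by blast
    qed
  qed
qed

end


theorem proposition3p12:
  fixes sc :: "complex \<Rightarrow> 'v::ab_group_add \<Rightarrow> 'v"
    and Y :: "'v \<Rightarrow> int \<Rightarrow> 'v \<Rightarrow> 'v"
    and vac :: 'v
    and scW :: "complex \<Rightarrow> 'w::ab_group_add \<Rightarrow> 'w"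
    and YW :: "(('r::finite \<Rightarrow> int) \<Rightarrow>\<^sub>0 'v) \<Rightarrow> int \<Rightarrow> 'w \<Rightarrow> 'w"
  assumes "vertex_algebra sc Y vac"
    and "countable_dim sc"
    and "irreducible_module (lr_scale sc) (lr_Y Y) (lr_vac vac) scW YW"
  shows "\<exists>(scU :: complex \<Rightarrow> 'w \<Rightarrow> 'w) (YU :: 'v \<Rightarrow> int \<Rightarrow> 'w \<Rightarrow> 'w) (a :: 'r \<Rightarrow> complex).
           irreducible_module sc Y vac scU YU \<and> (\<forall>i. a i \<noteq> 0) \<and>
           module_iso scW YW scU (twist_Y scU YU a)"
proof -
  have WM: "vertex_module (lr_scale sc) (lr_Y Y) (lr_vac vac) scW YW"
    and nz: "\<exists>w::'w. w \<noteq> 0"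
    and irr: "\<forall>S. module.subspace scW S \<and> (\<forall>u n w. w \<in> S \<longrightarrow> YW u n w \<in> S) \<longrightarrow> S = {0} \<or> S = UNIV"
    using assms(3)[unfolded irreducible_module_def]
    by (rule conjunct1, rule conjunct1[OF conjunct2], rule conjunct2[OF conjunct2])
  interpret Wmod sc Y vac scW YW by (rule Wmod.intro[OF assms(1) WM])
  obtain w0 :: 'w where w0: "w0 \<noteq> 0" using nz by blast
  have "\<forall>k. \<exists>c. \<forall>w. E k w = scW c w" using E_scalar[OF w0 assms(2) irr] by blast
  from choice[OF this] obtain c where c0: "\<forall>k w. E k w = scW (c k) w" by blast
  then have c: "\<And>k w. E k w = scW (c k) w" by blast
  have cmult: "c (\<lambda>i. k i + k' i) = c k * c k'" for k k'
  proof -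
    have "scW (c (\<lambda>i. k i + k' i)) w0 = scW (c k * c k') w0"
      using E_mult[of k k' w0] by (simp add: c) metis
    then show ?thesis using w0 by simp
  qed
  have cone: "c (\<lambda>i. 0) = 1"
  proof -
    have "scW (c (\<lambda>i. 0)) w0 = scW 1 w0" using E0[of w0] by (simp add: c)
    then show ?thesis using w0 W.scale_cancel_right[of "c (\<lambda>i. 0)" w0 1] by simp
  qed
  define a where "a = (\<lambda>i. c (\<lambda>j. if j = i then 1 else 0))"
  have anz: "\<forall>i. a i \<noteq> 0" and ca: "\<And>k. c k = (\<Prod>i\<in>UNIV. a i powi k i)"
    using character[of c, OF cmult cone] unfolding a_def by blast+
  define YU where "YU v n w = YW (Poly_Mapping.single (\<lambda>i. 0) v) n w" for v n w
  have dec: "YW F n w = (\<Sum>k\<in>Poly_Mapping.keys F. scW (c k) (YU (Poly_Mapping.lookup F k) n w))" for F n w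
    unfolding YU_def by (subst YW_decomp) (simp only: c)
  have VMU: "vertex_module sc Y vac scW YU"
    unfolding vertex_module_def
  proof (intro conjI allI)
    show "vector_space sc" by (rule V.vector_space_axioms)
    show "vector_space scW" by (rule vsW)
    show "Vector_Spaces.linear scW scW (YU u n)" for u n unfolding YU_def by (rule linW)
    show "Vector_Spaces.linear sc scW (\<lambda>u. YU u n w)" for n w unfolding YU_def by (rule linS)
    show "\<exists>N. \<forall>n\<ge>N. YU u n w = 0" for u w
      using WM unfolding vertex_module_def YU_def by blast
    show "YU vac n w = (if n = -1 then w else 0)" for n w
      unfolding YU_def using YWvac by (simp add: lr_vac_def)
    show "fsum (\<lambda>i. scW ((of_int m) gchoose i) (YU (Y u (l + int i) v) (m + n - int i) w)) =
        fsum (\<lambda>i. scW ((-1) ^ i * ((of_int l) gchoose i))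
                   (YU u (m + l - int i) (YU v (n + int i) w)
                    - scW ((-1) powi l) (YU v (n + l - int i) (YU u (m + int i) w))))" for u v w l m n
      using BI[where u="Poly_Mapping.single (\<lambda>i. 0) u" and v="Poly_Mapping.single (\<lambda>i. 0) v"]
      unfolding YU_def by (simp add: lrY_single)
  qed
  have irrU: "irreducible_module sc Y vac scW YU"
    unfolding irreducible_module_def
  proof (intro conjI allI impI)
    show "vertex_module sc Y vac scW YU" by (rule VMU)
    show "\<exists>w::'w. w \<noteq> 0" by (rule nz)
    fix S assume S: "module.subspace scW S \<and> (\<forall>u n w. w \<in> S \<longrightarrow> YU u n w \<in> S)"
    have "YW F n w \<in> S" if "w \<in> S" for F n w
      unfolding dec using S that
      by (intro W.subspace_sum W.subspace_scale) auto
    then show "S = {0} \<or> S = UNIV" using S by (intro irr[rule_format]) blast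
  qed
  have iso: "module_iso scW YW scW (twist_Y scW YU a)"
    unfolding module_iso_def
  proof (intro exI[of _ id] conjI allI)
    show "bij (id :: 'w \<Rightarrow> 'w)" by simp
    show "Vector_Spaces.linear scW scW id" by (rule W.linear_id)
    show "id (YW u n w) = twist_Y scW YU a u n (id w)" for u n w
      unfolding twist_Y_def by (simp add: dec ca)
  qed
  show ?thesis
    by (rule exI[of _ scW], rule exI[of _ YU], rule exI[of _ a]) (intro conjI irrU anz iso)
qed

end
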